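(* Let $n\ge3$, $\rho>0$, and let $h$ be a smooth function on $[0,\rho)$ such that $$F(x,y)=\sqrt{(1+|\overline{x}|^2)|\overline{y}|^2+\langle\overline{x},\overline{y}\rangle^2+e^{x^0}(y^0)^2}+h(|\overline{x}|)\langle\overline{x},\overline{y}\rangle$$ is a Finsler metric on $\mathbb{R}\times\mathbb{B}^n(\rho)$ (for instance $h(r)=\frac{k}{1+r^2}$ with $|k|<2$). Then $F$ is a cylindrically symmetric Finsler metric with vanishing Douglas curvature.
   Context: Points $x=(x^0,\overline{x})\in\mathbb{R}\times\mathbb{B}^n(\rho)$, tangent vectors $y=(y^0,\overline{y})$, $|\cdot|,\langle\cdot,\cdot\rangle$ Euclidean on $\mathbb{R}^n$. A Finsler metric $F$ is cylindrically symmetric if $F((x^0,O\overline{x}),(y^0,O\overline{y}))=F((x^0,\overline{x}),(y^0,\overline{y}))$ for all $O\in O(n)$. The Douglas curvature is $D^A_{BCD}=\frac{\partial^3}{\partial y^B\partial y^C\partial y^D}\big(G^A-\frac{1}{n+2}\sum_{E=0}^n\frac{\partial G^E}{\partial y^E}y^A\big)$, $A,B,C,D\in\{0,\dots,n\}$, where $G^A=\frac14g^{AB}\{[F^2]_{x^Cy^B}y^C-[F^2]_{x^B}\}$ are the geodesic coefficients ($g_{AB}=\frac12[F^2]_{y^Ay^B}$, summation convention). *)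

theory Defs
  imports "HOL-Analysis.Analysis"
begin

text \<open>Coordinates on R x R^n are indexed by the finite type 'n option:
  None is the coordinate 0 (x^0), Some i are the coordinates of xbar.\<close>

definition xbar :: "real^('n::finite) option \<Rightarrow> real^'n" where
  "xbar x = (\<chi> i. x $ Some i)"

definition dd :: "'a::real_normed_vector \<Rightarrow> ('a \<Rightarrow> real) \<Rightarrow> 'a \<Rightarrow> real" where
  "dd v f p = deriv (\<lambda>t. f (p + t *\<^sub>R v)) 0"

fun itdd :: "'a::real_normed_vector list \<Rightarrow> ('a \<Rightarrow> real) \<Rightarrow> 'a \<Rightarrow> real" where
  "itdd [] f = f"
| "itdd (v # vs) f = dd v (itdd vs f)"

definition smooth_on :: "'a::euclidean_space set \<Rightarrow> ('a \<Rightarrow> real) \<Rightarrow> bool" where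
  "smooth_on S f \<longleftrightarrow> open S \<and>
     (\<forall>vs. set vs \<subseteq> Basis \<longrightarrow> continuous_on S (itdd vs f) \<and>
        (\<forall>v\<in>Basis. \<forall>p\<in>S. (\<lambda>t. itdd vs f (p + t *\<^sub>R v)) differentiable (at 0)))"

definition smooth_real_on :: "real set \<Rightarrow> (real \<Rightarrow> real) \<Rightarrow> bool" where
  "smooth_real_on S h \<longleftrightarrow> (\<exists>D :: nat \<Rightarrow> real \<Rightarrow> real.
     (\<forall>t\<in>S. D 0 t = h t) \<and>
     (\<forall>k. \<forall>t\<in>S. (D k has_real_derivative D (Suc k) t) (at t within S)))"

definition pdy :: "'m::finite \<Rightarrow> (real^'m \<Rightarrow> real^'m \<Rightarrow> real) \<Rightarrow> real^'m \<Rightarrow> real^'m \<Rightarrow> real" where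
  "pdy A f x y = deriv (\<lambda>t. f x (y + t *\<^sub>R axis A 1)) 0"

definition pdx :: "'m::finite \<Rightarrow> (real^'m \<Rightarrow> real^'m \<Rightarrow> real) \<Rightarrow> real^'m \<Rightarrow> real^'m \<Rightarrow> real" where
  "pdx A f x y = deriv (\<lambda>t. f (x + t *\<^sub>R axis A 1) y) 0"

definition Fsq :: "(real^'m::finite \<Rightarrow> real^'m \<Rightarrow> real) \<Rightarrow> real^'m \<Rightarrow> real^'m \<Rightarrow> real" where
  "Fsq F x y = (F x y)^2"

definition fund_tensor :: "(real^'m::finite \<Rightarrow> real^'m \<Rightarrow> real) \<Rightarrow> real^'m \<Rightarrow> real^'m \<Rightarrow> real^'m^'m" where
  "fund_tensor F x y = (\<chi> A B. 1/2 * pdy A (pdy B (Fsq F)) x y)"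

definition finsler_metric :: "(real^'m::finite) set \<Rightarrow> (real^'m \<Rightarrow> real^'m \<Rightarrow> real) \<Rightarrow> bool" where
  "finsler_metric M F \<longleftrightarrow> open M \<and>
     smooth_on (M \<times> (UNIV - {0})) (\<lambda>(x,y). F x y) \<and>
     (\<forall>x\<in>M. \<forall>y. y \<noteq> 0 \<longrightarrow> F x y > 0) \<and>
     (\<forall>x\<in>M. \<forall>y. \<forall>l::real. l > 0 \<longrightarrow> F x (l *\<^sub>R y) = l * F x y) \<and>
     (\<forall>x\<in>M. \<forall>y. y \<noteq> 0 \<longrightarrow>
        (\<forall>v. v \<noteq> 0 \<longrightarrow> (\<Sum>A\<in>UNIV. \<Sum>B\<in>UNIV. fund_tensor F x y $ A $ B * v $ A * v $ B) > 0))"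

definition geod_coeff :: "(real^'m::finite \<Rightarrow> real^'m \<Rightarrow> real) \<Rightarrow> 'm \<Rightarrow> real^'m \<Rightarrow> real^'m \<Rightarrow> real" where
  "geod_coeff F A x y = 1/4 * (\<Sum>B\<in>UNIV. matrix_inv (fund_tensor F x y) $ A $ B *
      ((\<Sum>C\<in>UNIV. pdx C (pdy B (Fsq F)) x y * y $ C) - pdx B (Fsq F) x y))"

text \<open>Douglas curvature D^A_{BCD} on a manifold of dimension m = CARD('m);
  the factor is 1/(m+1) (= 1/(n+2) when m = n+1).\<close>
definition douglas :: "(real^'m::finite \<Rightarrow> real^'m \<Rightarrow> real) \<Rightarrow> 'm \<Rightarrow> 'm \<Rightarrow> 'm \<Rightarrow> 'm \<Rightarrow> real^'m \<Rightarrow> real^'m \<Rightarrow> real" where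
  "douglas F A B C D x y =
     pdy B (pdy C (pdy D (\<lambda>x y. geod_coeff F A x y
        - 1 / (real CARD('m) + 1) * (\<Sum>E\<in>UNIV. pdy E (geod_coeff F E) x y) * y $ A))) x y"

definition vanishing_douglas :: "(real^'m::finite) set \<Rightarrow> (real^'m \<Rightarrow> real^'m \<Rightarrow> real) \<Rightarrow> bool" where
  "vanishing_douglas M F \<longleftrightarrow>
     (\<forall>x\<in>M. \<forall>y. y \<noteq> 0 \<longrightarrow> (\<forall>A B C D. douglas F A B C D x y = 0))"

definition lift_orth :: "(real^'n \<Rightarrow> real^'n) \<Rightarrow> real^('n::finite) option \<Rightarrow> real^'n option" where
  "lift_orth Q x = (\<chi> A. case A of None \<Rightarrow> x $ None | Some i \<Rightarrow> Q (xbar x) $ i)"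

definition cylindrically_symmetric ::
  "(real^('n::finite) option) set \<Rightarrow> (real^'n option \<Rightarrow> real^'n option \<Rightarrow> real) \<Rightarrow> bool" where
  "cylindrically_symmetric M F \<longleftrightarrow>
     (\<forall>Q. orthogonal_transformation Q \<longrightarrow>
        (\<forall>x\<in>M. \<forall>y. F (lift_orth Q x) (lift_orth Q y) = F x y))"

definition cyl_domain :: "real \<Rightarrow> (real^('n::finite) option) set" where
  "cyl_domain \<rho> = {x. norm (xbar x) < \<rho>}"

definition F_ex :: "(real \<Rightarrow> real) \<Rightarrow> real^('n::finite) option \<Rightarrow> real^'n option \<Rightarrow> real" where
  "F_ex h x y =
     sqrt ((1 + (norm (xbar x))^2) * (norm (xbar y))^2 + (xbar x \<bullet> xbar y)^2
           + exp (x $ None) * (y $ None)^2)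
     + h (norm (xbar x)) * (xbar x \<bullet> xbar y)"

end

theory Submission
  imports Defs
begin

lemma matrix_inv_props:
  fixes A :: "real^'m::finite^'m"
  assumes "invertible A"
  shows "matrix_inv A ** A = mat 1" "A ** matrix_inv A = mat 1"
  using assms unfolding invertible_def matrix_inv_def by (metis (mono_tags, lifting) someI_ex)+

lemma invertible_from_ker:
  fixes A :: "real^'m::finite^'m"
  assumes "\<And>v. A *v v = 0 \<Longrightarrow> v = 0"
  shows "invertible A"
  using assms matrix_left_invertible_ker invertible_left_inverse by blast

lemma line_eventually:
  fixes y v :: "'a::real_normed_vector"
  assumes "open U" "y \<in> U"
  shows "\<forall>\<^sub>F t in nhds (0::real). y + t *\<^sub>R v \<in> U"
proof -
  have "((\<lambda>t::real. y + t *\<^sub>R v) \<longlongrightarrow> y + 0 *\<^sub>R v) (nhds 0)"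
    by (intro tendsto_intros filterlim_ident)
  then have "((\<lambda>t::real. y + t *\<^sub>R v) \<longlongrightarrow> y) (nhds 0)" by simp
  then show ?thesis using assms topological_tendstoD by blast
qed

lemma pdy_local:
  assumes "open U" "y \<in> U" "\<And>z. z \<in> U \<Longrightarrow> f x z = g x z"
  shows "pdy D f x y = pdy D g x y"
proof -
  have "\<forall>\<^sub>F t in nhds 0. f x (y + t *\<^sub>R axis D 1) = g x (y + t *\<^sub>R axis D 1)"
    by (rule eventually_mono[OF line_eventually[OF assms(1,2), of "axis D 1"]]) (simp add: assms(3))
  then show ?thesis unfolding pdy_def by (rule deriv_cong_ev) simp
qed

lemma pdy_eq:
  assumes "((\<lambda>t. f x (y + t *\<^sub>R axis D 1)) has_real_derivative d) (at 0)"
  shows "pdy D f x y = d"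
  using assms unfolding pdy_def by (rule DERIV_imp_deriv)

lemma pdx_eq:
  assumes "((\<lambda>t. f (x + t *\<^sub>R axis D 1) y) has_real_derivative d) (at 0)"
  shows "pdx D f x y = d"
  using assms unfolding pdx_def by (rule DERIV_imp_deriv)

lemma sqrt_poly_deriv:
  assumes "(q0::real) > 0"
  shows "((\<lambda>t. sqrt (q0 + t*c1 + t^2*c2)) has_real_derivative c1/(2 * sqrt q0)) (at 0)"
proof -
  have d: "((\<lambda>t. q0 + t*c1 + t^2*c2) has_real_derivative c1) (at 0)"
    by (auto intro!: derivative_eq_intros)
  have s: "(sqrt has_real_derivative inverse (sqrt q0)/2) (at ((\<lambda>t. q0 + t*c1 + t^2*c2) 0))"
    using DERIV_real_sqrt[OF assms] by simp
  from DERIV_chain2[OF s d] show ?thesis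
    by (rule DERIV_cong) (simp add: field_simps)
qed

lemma sym_inner:
  fixes A :: "real^'m::finite^'m"
  assumes "transpose A = A"
  shows "u \<bullet> (A *v w) = w \<bullet> (A *v u)"
proof -
  have s: "A$i$j = A$j$i" for i j using assms by (metis transpose_def vec_lambda_beta)
  have "u \<bullet> (A *v w) = (\<Sum>i\<in>UNIV. \<Sum>j\<in>UNIV. u$i * A$i$j * w$j)"
    by (simp add: inner_vec_def matrix_vector_mult_def sum_distrib_left mult.assoc)
  also have "\<dots> = (\<Sum>j\<in>UNIV. \<Sum>i\<in>UNIV. u$i * A$i$j * w$j)" by (rule sum.swap)
  also have "\<dots> = w \<bullet> (A *v u)"
    by (simp add: inner_vec_def matrix_vector_mult_def sum_distrib_left s mult.commute mult.left_commute)
  finally show ?thesis .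
qed

lemma mv_axis: "((A::real^'m::finite^'m) *v axis C 1) $ D = A $ D $ C"
  by (simp add: matrix_vector_mult_def axis_def if_distrib cong: if_cong)


section \<open>Abstract Randers metrics\<close>

locale randers =
  fixes a :: "real^'m::finite \<Rightarrow> real^'m^'m" and b :: "real^'m \<Rightarrow> real^'m"
    and F :: "real^'m \<Rightarrow> real^'m \<Rightarrow> real"
  assumes F_eq: "\<And>x y. F x y = sqrt (y \<bullet> (a x *v y)) + b x \<bullet> y"
    and a_sym: "\<And>x. transpose (a x) = a x"
    and q_pos: "\<And>x y. y \<noteq> 0 \<Longrightarrow> y \<bullet> (a x *v y) > 0"
begin

definition q where "q x y = y \<bullet> (a x *v y)"
definition al where "al x y = sqrt (q x y)"
definition Fy where "Fy x y = (1 / al x y) *\<^sub>R (a x *v y) + b x"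

lemma a_ij: "a x $ i $ j = a x $ j $ i"
  using a_sym[of x] by (metis transpose_def vec_lambda_beta)

lemma F_al: "F x y = al x y + b x \<bullet> y"
  by (simp add: F_eq al_def q_def)

lemma q_line: "q x (y + t *\<^sub>R v) = q x y + t * (2 * ((a x *v y) \<bullet> v)) + t^2 * q x v"
proof -
  have s: "y \<bullet> (a x *v v) = (a x *v y) \<bullet> v"
    using sym_inner[OF a_sym] inner_commute by metis
  show ?thesis
    unfolding q_def
    by (simp add: matrix_vector_right_distrib matrix_vector_mult_scaleR inner_add_left inner_add_right
        s power2_eq_square algebra_simps inner_commute)
qed

lemma al_pos: "y \<noteq> 0 \<Longrightarrow> al x y > 0"
  using q_pos by (simp add: al_def q_def)

lemma Fy_comp: "Fy x y $ D = (a x *v y) $ D / al x y + b x $ D"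
  by (simp add: Fy_def)

lemma al_line_deriv:
  assumes "y \<noteq> 0"
  shows "((\<lambda>t. al x (y + t *\<^sub>R v)) has_real_derivative ((a x *v y) \<bullet> v) / al x y) (at 0)"
proof -
  have "q x y > 0" using q_pos[OF assms] by (simp add: q_def)
  from sqrt_poly_deriv[OF this, of "2 * ((a x *v y) \<bullet> v)" "q x v"]
  show ?thesis unfolding al_def q_line by simp
qed

lemma F_line_deriv:
  assumes "y \<noteq> 0"
  shows "((\<lambda>t. F x (y + t *\<^sub>R v)) has_real_derivative Fy x y \<bullet> v) (at 0)"
proof -
  have e: "F x (y + t *\<^sub>R v) = al x (y + t *\<^sub>R v) + (b x \<bullet> y + t * (b x \<bullet> v))" for t
    by (simp add: F_al inner_add_right)
  have "((\<lambda>t. al x (y + t *\<^sub>R v) + (b x \<bullet> y + t * (b x \<bullet> v))) has_real_derivative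
      ((a x *v y) \<bullet> v) / al x y + b x \<bullet> v) (at 0)"
    by (auto intro!: derivative_eq_intros al_line_deriv[OF assms])
  moreover have "Fy x y \<bullet> v = ((a x *v y) \<bullet> v) / al x y + b x \<bullet> v"
    by (simp add: Fy_def inner_add_left)
  ultimately show ?thesis unfolding e by simp
qed

lemma pdy_Fsq:
  assumes "y \<noteq> 0"
  shows "pdy D (Fsq F) x y = 2 * F x y * Fy x y $ D"
proof (rule pdy_eq)
  show "((\<lambda>t. Fsq F x (y + t *\<^sub>R axis D 1)) has_real_derivative 2 * F x y * Fy x y $ D) (at 0)"
    unfolding Fsq_def
    by (auto intro!: derivative_eq_intros F_line_deriv[OF assms] simp: inner_axis)
qed

lemma pdyy_Fsq:
  assumes "y \<noteq> 0"
  shows "pdy C (pdy D (Fsq F)) x y = 2 * (Fy x y $ C * Fy x y $ D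
     + F x y * (a x $ D $ C / al x y - (a x *v y) $ D * (a x *v y) $ C / al x y ^ 3))"
proof -
  have "pdy C (pdy D (Fsq F)) x y = pdy C (\<lambda>x z. 2 * F x z * ((a x *v z) $ D / al x z + b x $ D)) x y"
    by (rule pdy_local[of "-{0}"]) (use assms pdy_Fsq Fy_comp in auto)
  also have "\<dots> = 2 * (Fy x y $ C * Fy x y $ D
     + F x y * (a x $ D $ C / al x y - (a x *v y) $ D * (a x *v y) $ C / al x y ^ 3))"
  proof (rule pdy_eq)
    have l: "(a x *v (y + t *\<^sub>R axis C 1)) $ D = (a x *v y) $ D + t * a x $ D $ C" for t
      by (simp add: matrix_vector_right_distrib matrix_vector_mult_scaleR mv_axis)
    have p: "al x y > 0" using al_pos[OF assms] .
    have "((\<lambda>t. 2 * F x (y + t *\<^sub>R axis C 1) * (((a x *v y) $ D + t * a x $ D $ C) / al x (y + t *\<^sub>R axis C 1) + b x $ D))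
       has_real_derivative 2 * (Fy x y $ C * Fy x y $ D
     + F x y * (a x $ D $ C / al x y - (a x *v y) $ D * (a x *v y) $ C / al x y ^ 3))) (at 0)"
      using p by (auto intro!: derivative_eq_intros F_line_deriv[OF assms] al_line_deriv[OF assms]
          simp: Fy_comp inner_axis field_simps power3_eq_cube)
    then show "((\<lambda>t. 2 * F x (y + t *\<^sub>R axis C 1) * ((a x *v (y + t *\<^sub>R axis C 1)) $ D / al x (y + t *\<^sub>R axis C 1) + b x $ D))
       has_real_derivative 2 * (Fy x y $ C * Fy x y $ D
     + F x y * (a x $ D $ C / al x y - (a x *v y) $ D * (a x *v y) $ C / al x y ^ 3))) (at 0)"
      unfolding l .
  qed
  finally show ?thesis .
qed

end

locale randers_pt = randers a b F for a :: "real^'m::finite \<Rightarrow> real^'m^'m" and b F +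
  fixes x0 :: "real^'m" and Da :: "'m \<Rightarrow> real^'m^'m" and Db :: "real^'m^'m"
  assumes da: "\<And>C i j. ((\<lambda>t. a (x0 + t *\<^sub>R axis C 1) $ i $ j) has_real_derivative Da C $ i $ j) (at 0)"
    and db: "\<And>C j. ((\<lambda>t. b (x0 + t *\<^sub>R axis C 1) $ j) has_real_derivative Db $ C $ j) (at 0)"
    and db_sym: "\<And>C j. Db $ C $ j = Db $ j $ C"
begin

lemma q_xderiv: "((\<lambda>t. q (x0 + t *\<^sub>R axis C 1) y) has_real_derivative y \<bullet> (Da C *v y)) (at 0)"
  unfolding q_def inner_vec_def matrix_vector_mult_def
  by (auto intro!: derivative_eq_intros DERIV_sum da simp: sum_distrib_left)

lemma mv_xderiv: "((\<lambda>t. (a (x0 + t *\<^sub>R axis C 1) *v y) $ D) has_real_derivative (Da C *v y) $ D) (at 0)"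
  unfolding matrix_vector_mult_def
  by (auto intro!: derivative_eq_intros DERIV_sum da)

lemma b_xderiv: "((\<lambda>t. b (x0 + t *\<^sub>R axis C 1) \<bullet> y) has_real_derivative (Db *v y) $ C) (at 0)"
  unfolding matrix_vector_mult_def inner_vec_def
  by (auto intro!: derivative_eq_intros DERIV_sum db simp: mult.commute)

lemma al_xderiv:
  assumes "y \<noteq> 0"
  shows "((\<lambda>t. al (x0 + t *\<^sub>R axis C 1) y) has_real_derivative (y \<bullet> (Da C *v y)) / (2 * al x0 y)) (at 0)"
proof -
  have p: "q x0 y > 0" using q_pos[OF assms] by (simp add: q_def)
  have s: "(sqrt has_real_derivative inverse (sqrt (q x0 y))/2) (at ((\<lambda>t. q (x0 + t *\<^sub>R axis C 1) y) 0))"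
    using DERIV_real_sqrt[OF p] by simp
  from DERIV_chain2[OF s q_xderiv] show ?thesis
    unfolding al_def by (rule DERIV_cong) (simp add: field_simps)
qed

definition Fx where "Fx C y = (y \<bullet> (Da C *v y)) / (2 * al x0 y) + (Db *v y) $ C"

lemma F_xderiv:
  assumes "y \<noteq> 0"
  shows "((\<lambda>t. F (x0 + t *\<^sub>R axis C 1) y) has_real_derivative Fx C y) (at 0)"
  unfolding F_al Fx_def
  by (auto intro!: derivative_eq_intros al_xderiv[OF assms] b_xderiv)

lemma pdx_Fsq:
  assumes "y \<noteq> 0"
  shows "pdx C (Fsq F) x0 y = 2 * F x0 y * Fx C y"
  by (rule pdx_eq) (auto simp: Fsq_def intro!: derivative_eq_intros F_xderiv[OF assms])

lemma pdxy_Fsq: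
  assumes "y \<noteq> 0"
  shows "pdx C (pdy D (Fsq F)) x0 y = 2 * Fx C y * Fy x0 y $ D + 2 * F x0 y *
     ((Da C *v y) $ D / al x0 y - (a x0 *v y) $ D * (y \<bullet> (Da C *v y)) / (2 * al x0 y ^ 3) + Db $ C $ D)"
proof (rule pdx_eq)
  have p: "al x0 y > 0" using al_pos[OF assms] .
  have e: "(\<lambda>t. pdy D (Fsq F) (x0 + t *\<^sub>R axis C 1) y) =
     (\<lambda>t. 2 * F (x0 + t *\<^sub>R axis C 1) y * ((a (x0 + t *\<^sub>R axis C 1) *v y) $ D / al (x0 + t *\<^sub>R axis C 1) y + b (x0 + t *\<^sub>R axis C 1) $ D))"
    using pdy_Fsq[OF assms] Fy_comp by auto
  show "((\<lambda>t. pdy D (Fsq F) (x0 + t *\<^sub>R axis C 1) y) has_real_derivative 2 * Fx C y * Fy x0 y $ D + 2 * F x0 y *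
     ((Da C *v y) $ D / al x0 y - (a x0 *v y) $ D * (y \<bullet> (Da C *v y)) / (2 * al x0 y ^ 3) + Db $ C $ D)) (at 0)"
    unfolding e
    using p by (auto intro!: derivative_eq_intros F_xderiv[OF assms] al_xderiv[OF assms] mv_xderiv db
        simp: Fy_comp field_simps power3_eq_cube)
qed

end


context randers_pt
begin

definition S where "S y = (\<Sum>C\<in>UNIV. y $ C * (y \<bullet> (Da C *v y)))"
definition K where "K y = (\<chi> D. (\<Sum>C\<in>UNIV. y $ C * (Da C *v y) $ D) - (y \<bullet> (Da D *v y)) / 2)"
definition sF where "sF y = (\<Sum>C\<in>UNIV. y $ C * Fx C y)"
definition wv where "wv y = (\<chi> D. (\<Sum>C\<in>UNIV. pdx C (pdy D (Fsq F)) x0 y * y $ C) - pdx D (Fsq F) x0 y)"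

lemma Dbv: "(\<Sum>C\<in>UNIV. Db $ C $ D * y $ C) = (Db *v y) $ D"
  by (simp add: matrix_vector_mult_def db_sym)

lemma sF_eq: "sF y = S y / (2 * al x0 y) + y \<bullet> (Db *v y)"
proof -
  have "sF y = (\<Sum>C\<in>UNIV. y $ C * (y \<bullet> (Da C *v y)) / (2 * al x0 y) + y $ C * (Db *v y) $ C)"
    by (simp add: sF_def Fx_def distrib_left)
  also have "\<dots> = S y / (2 * al x0 y) + (\<Sum>C\<in>UNIV. y $ C * (Db *v y) $ C)"
    by (simp add: sum.distrib sum_divide_distrib[symmetric] S_def)
  also have "(\<Sum>C\<in>UNIV. y $ C * (Db *v y) $ C) = y \<bullet> (Db *v y)"
    by (simp add: inner_vec_def)
  finally show ?thesis .
qed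

lemma wv_alg:
  fixes fy sf ff al X Y S u Dv :: real
  assumes "al > 0"
  shows "(2 * fy * sf + (2 * ff / al) * X - (ff * u / al ^ 3) * S + 2 * ff * Dv) - 2 * ff * (Y / (2 * al) + Dv)
     = 2 * sf * fy + 2 * ff * ((1 / al) * (X - Y / 2) - S / (2 * al ^ 3) * u)"
  using assms by (simp add: field_simps power3_eq_cube)

lemma wv_eq:
  assumes "y \<noteq> 0"
  shows "wv y = (2 * sF y) *\<^sub>R Fy x0 y + (2 * F x0 y) *\<^sub>R ((1 / al x0 y) *\<^sub>R K y - (S y / (2 * al x0 y ^ 3)) *\<^sub>R (a x0 *v y))"
proof -
  have p: "al x0 y > 0" using al_pos[OF assms] .
  show ?thesis
  unfolding vec_eq_iff proof (intro allI)
    fix D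
    let ?u = "(a x0 *v y) $ D"
    have "(\<Sum>C\<in>UNIV. pdx C (pdy D (Fsq F)) x0 y * y $ C) =
      (\<Sum>C\<in>UNIV. 2 * Fy x0 y $ D * (y $ C * Fx C y) + (2 * F x0 y / al x0 y) * (y $ C * (Da C *v y) $ D)
          - (F x0 y * ?u / al x0 y ^ 3) * (y $ C * (y \<bullet> (Da C *v y))) + 2 * F x0 y * (Db $ C $ D * y $ C))"
      by (rule sum.cong) (use p in \<open>simp_all add: pdxy_Fsq[OF assms] field_simps power3_eq_cube\<close>)
    also have "\<dots> = 2 * Fy x0 y $ D * sF y + (2 * F x0 y / al x0 y) * (\<Sum>C\<in>UNIV. y $ C * (Da C *v y) $ D)
          - (F x0 y * ?u / al x0 y ^ 3) * S y + 2 * F x0 y * (Db *v y) $ D"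
      unfolding sum.distrib sum_subtractf sum_distrib_left[symmetric] sF_def[symmetric] S_def[symmetric] Dbv ..
    finally have e: "(\<Sum>C\<in>UNIV. pdx C (pdy D (Fsq F)) x0 y * y $ C) = 2 * Fy x0 y $ D * sF y + (2 * F x0 y / al x0 y) * (\<Sum>C\<in>UNIV. y $ C * (Da C *v y) $ D)
          - (F x0 y * ?u / al x0 y ^ 3) * S y + 2 * F x0 y * (Db *v y) $ D" .
    have k: "K y $ D = (\<Sum>C\<in>UNIV. y $ C * (Da C *v y) $ D) - (y \<bullet> (Da D *v y)) / 2"
      by (simp add: K_def)
    show "wv y $ D = ((2 * sF y) *\<^sub>R Fy x0 y + (2 * F x0 y) *\<^sub>R ((1 / al x0 y) *\<^sub>R K y - (S y / (2 * al x0 y ^ 3)) *\<^sub>R (a x0 *v y))) $ D"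
      unfolding wv_def vec_lambda_beta e pdx_Fsq[OF assms] Fx_def vector_add_component vector_scaleR_component
        vector_minus_component k real_scaleR_def
      by (rule wv_alg[OF p])
  qed
qed

definition Ai where "Ai = matrix_inv (a x0)"
definition Ga where "Ga y = Ai *v ((1/2) *\<^sub>R K y)"
definition Nn where "Nn y = (y \<bullet> (Db *v y)) / 2 - b x0 \<bullet> Ga y"
definition P where "P y = Nn y / F x0 y"
definition Gc where "Gc y = Ga y + P y *\<^sub>R y"

lemma a_inv: "invertible (a x0)"
proof (rule invertible_from_ker)
  fix v assume "a x0 *v v = 0"
  then have "v \<bullet> (a x0 *v v) = 0" by simp
  then show "v = 0" using q_pos[of v x0] by (cases "v = 0") auto
qed

lemma aGa: "a x0 *v Ga y = (1/2) *\<^sub>R K y"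
  unfolding Ga_def Ai_def matrix_vector_mul_assoc matrix_inv_props(2)[OF a_inv] by simp

lemma yK: "y \<bullet> K y = S y / 2"
proof -
  have "y \<bullet> K y = (\<Sum>D\<in>UNIV. y $ D * K y $ D)" by (simp add: inner_vec_def)
  also have "\<dots> = (\<Sum>D\<in>UNIV. y $ D * (\<Sum>C\<in>UNIV. y $ C * (Da C *v y) $ D)) - S y / 2"
    by (simp add: K_def right_diff_distrib sum_subtractf S_def sum_divide_distrib mult.commute)
  also have "(\<Sum>D\<in>UNIV. y $ D * (\<Sum>C\<in>UNIV. y $ C * (Da C *v y) $ D)) = (\<Sum>C\<in>UNIV. \<Sum>D\<in>UNIV. y $ D * (y $ C * (Da C *v y) $ D))"
    unfolding sum_distrib_left by (rule sum.swap)
  also have "\<dots> = S y"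
    by (simp add: S_def inner_vec_def sum_distrib_left mult.commute mult.left_commute)
  finally show ?thesis by simp
qed

end

lemma mv_comp: "((M::real^'m::finite^'m) *v v) $ D = (\<Sum>C\<in>UNIV. M $ D $ C * v $ C)"
  by (simp add: matrix_vector_mult_def)

lemma g_alg:
  fixes FD FC F al aDC vC uD uC :: real
  assumes "al > 0"
  shows "1/2 * (2 * (FD * FC + F * (aDC / al - uC * uD / al ^ 3))) * vC =
     FD * (FC * vC) + (F / al) * (aDC * vC) - (F * uD / al ^ 3) * (uC * vC)"
  using assms by (simp add: field_simps power3_eq_cube)

lemma ft_comp: "fund_tensor F x y $ D $ C = 1/2 * pdy D (pdy C (Fsq F)) x y"
  by (simp add: fund_tensor_def)

lemma (in randers) g_mv:
  assumes "y \<noteq> 0"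
  shows "fund_tensor F x y *v v = (Fy x y \<bullet> v) *\<^sub>R Fy x y
     + F x y *\<^sub>R ((1 / al x y) *\<^sub>R (a x *v v) - (((a x *v y) \<bullet> v) / al x y ^ 3) *\<^sub>R (a x *v y))"
  unfolding vec_eq_iff proof (intro allI)
  fix D
  have p: "al x y > 0" using al_pos[OF assms] .
  have "(fund_tensor F x y *v v) $ D = (\<Sum>C\<in>UNIV. Fy x y $ D * (Fy x y $ C * v $ C) + (F x y / al x y) * (a x $ D $ C * v $ C)
      - (F x y * (a x *v y) $ D / al x y ^ 3) * ((a x *v y) $ C * v $ C))"
    unfolding mv_comp[of "fund_tensor F x y"] ft_comp
  proof (rule sum.cong)
    fix C
    show "1 / 2 * pdy D (pdy C (Fsq F)) x y * v $ C = Fy x y $ D * (Fy x y $ C * v $ C) + (F x y / al x y) * (a x $ D $ C * v $ C)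
      - (F x y * (a x *v y) $ D / al x y ^ 3) * ((a x *v y) $ C * v $ C)"
      unfolding pdyy_Fsq[OF assms] a_ij[of x C D] by (rule g_alg[OF p])
  qed simp
  also have "\<dots> = Fy x y $ D * (Fy x y \<bullet> v) + (F x y / al x y) * (a x *v v) $ D
      - (F x y * (a x *v y) $ D / al x y ^ 3) * ((a x *v y) \<bullet> v)"
    unfolding sum.distrib sum_subtractf sum_distrib_left[symmetric] inner_vec_def mv_comp inner_real_def ..
  finally show "(fund_tensor F x y *v v) $ D = ((Fy x y \<bullet> v) *\<^sub>R Fy x y
     + F x y *\<^sub>R ((1 / al x y) *\<^sub>R (a x *v v) - (((a x *v y) \<bullet> v) / al x y ^ 3) *\<^sub>R (a x *v y))) $ D"
    by (simp add: field_simps)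
qed

lemma gc_alg:
  fixes fyD sf ff al KD uD pp S :: real
  assumes "al > 0"
  shows "sf / 2 * fyD + ff * (1 / al * (1 / 2 * KD + pp * uD) - (S / 4 + pp * al ^ 2) / al ^ 3 * uD)
    = 1 / 4 * (2 * sf * fyD + 2 * ff * (1 / al * KD - S / (2 * al ^ 3) * uD))"
  using assms by (simp add: field_simps power3_eq_cube power2_eq_square)

context randers_pt
begin

lemma aGc: "a x0 *v Gc y = (1/2) *\<^sub>R K y + P y *\<^sub>R (a x0 *v y)"
  by (simp add: Gc_def matrix_vector_right_distrib matrix_vector_mult_scaleR aGa)

lemma uGc:
  assumes "y \<noteq> 0"
  shows "(a x0 *v y) \<bullet> Gc y = S y / 4 + P y * al x0 y ^ 2"
proof -
  have "(a x0 *v y) \<bullet> Gc y = y \<bullet> (a x0 *v Gc y)"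
    using sym_inner[OF a_sym, of y x0 "Gc y"] by (simp add: inner_commute)
  also have "\<dots> = (1/2) * (y \<bullet> K y) + P y * q x0 y"
    by (simp add: aGc inner_add_right q_def)
  also have "q x0 y = al x0 y ^ 2"
    using q_pos[OF assms, of x0] by (simp add: al_def q_def)
  finally show ?thesis by (simp add: yK)
qed

lemma FyGc:
  assumes "y \<noteq> 0" "F x0 y > 0"
  shows "Fy x0 y \<bullet> Gc y = sF y / 2"
proof -
  have p: "al x0 y > 0" using al_pos[OF assms(1)] .
  have PF: "P y * F x0 y = (y \<bullet> (Db *v y)) / 2 - b x0 \<bullet> Ga y"
    using assms(2) by (simp add: P_def Nn_def)
  have "Fy x0 y \<bullet> Gc y = ((a x0 *v y) \<bullet> Gc y) / al x0 y + b x0 \<bullet> Ga y + P y * (b x0 \<bullet> y)"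
    using p by (simp add: Fy_def Gc_def inner_add_left inner_add_right field_simps)
  also have "\<dots> = S y / (4 * al x0 y) + (P y * (al x0 y + b x0 \<bullet> y) + b x0 \<bullet> Ga y)"
    using p by (simp add: uGc[OF assms(1)] field_simps power2_eq_square)
  also have "P y * (al x0 y + b x0 \<bullet> y) + b x0 \<bullet> Ga y = (y \<bullet> (Db *v y)) / 2"
    using PF by (simp add: F_al)
  finally show ?thesis
    using p by (simp add: sF_eq field_simps)
qed

lemma gc_eq:
  assumes "y \<noteq> 0" "F x0 y > 0"
  shows "fund_tensor F x0 y *v Gc y = (1/4) *\<^sub>R wv y"
proof -
  have p: "al x0 y > 0" using al_pos[OF assms(1)] .
  show ?thesis
    unfolding g_mv[OF assms(1)] FyGc[OF assms] uGc[OF assms(1)] aGc wv_eq[OF assms(1)] vec_eq_iff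
  proof (intro allI)
    fix D
    show "((sF y / 2) *\<^sub>R Fy x0 y + F x0 y *\<^sub>R ((1 / al x0 y) *\<^sub>R ((1/2) *\<^sub>R K y + P y *\<^sub>R (a x0 *v y))
        - ((S y / 4 + P y * al x0 y ^ 2) / al x0 y ^ 3) *\<^sub>R (a x0 *v y))) $ D =
      ((1/4) *\<^sub>R ((2 * sF y) *\<^sub>R Fy x0 y + (2 * F x0 y) *\<^sub>R ((1 / al x0 y) *\<^sub>R K y - (S y / (2 * al x0 y ^ 3)) *\<^sub>R (a x0 *v y)))) $ D"
      unfolding vector_add_component vector_scaleR_component vector_minus_component real_scaleR_def
      by (rule gc_alg[OF p])
  qed
qed

lemma geod_eq:
  assumes "y \<noteq> 0" "F x0 y > 0" "invertible (fund_tensor F x0 y)"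
  shows "geod_coeff F E x0 y = Gc y $ E"
proof -
  have "geod_coeff F E x0 y = (matrix_inv (fund_tensor F x0 y) *v ((1/4) *\<^sub>R wv y)) $ E"
    unfolding geod_coeff_def mv_comp vector_scaleR_component wv_def vec_lambda_beta real_scaleR_def
    by (simp add: sum_distrib_left mult.commute mult.left_commute)
  also have "\<dots> = Gc y $ E"
    unfolding gc_eq[OF assms(1,2), symmetric] matrix_vector_mul_assoc matrix_inv_props(1)[OF assms(3)]
    by simp
  finally show ?thesis .
qed

end

section \<open>Quadratic forms\<close>

definition qf :: "('m::finite \<Rightarrow> 'm \<Rightarrow> real) \<Rightarrow> real^'m \<Rightarrow> real" where
  "qf c y = (\<Sum>i\<in>UNIV. \<Sum>j\<in>UNIV. c i j * y $ i * y $ j)"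

definition lfn :: "('m::finite \<Rightarrow> real) \<Rightarrow> real^'m \<Rightarrow> real" where
  "lfn l y = (\<Sum>j\<in>UNIV. l j * y $ j)"

lemma axis_comp1: "axis D (1::real) $ i = (if i = D then 1 else 0)"
  by (simp add: axis_def)

lemma qf_line_deriv:
  "((\<lambda>t. qf c (y + t *\<^sub>R axis D 1)) has_real_derivative lfn (\<lambda>j. c D j + c j D) y) (at 0)"
proof -
  have "((\<lambda>t. qf c (y + t *\<^sub>R axis D 1)) has_real_derivative
     (\<Sum>i\<in>UNIV. \<Sum>j\<in>UNIV. c i j * (axis D 1 $ i) * y $ j + c i j * y $ i * (axis D 1 $ j))) (at 0)"
    unfolding qf_def
    by (auto intro!: derivative_eq_intros DERIV_sum simp: algebra_simps)
  moreover have "(\<Sum>i\<in>UNIV. \<Sum>j\<in>UNIV. c i j * (axis D 1 $ i) * y $ j + c i j * y $ i * (axis D 1 $ j))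
      = lfn (\<lambda>j. c D j + c j D) y"
  proof -
    have "(\<Sum>i\<in>UNIV. \<Sum>j\<in>UNIV. c i j * (axis D 1 $ i) * y $ j + c i j * y $ i * (axis D 1 $ j))
       = (\<Sum>i\<in>UNIV. \<Sum>j\<in>UNIV. c i j * (axis D 1 $ i) * y $ j) + (\<Sum>i\<in>UNIV. \<Sum>j\<in>UNIV. c i j * y $ i * (axis D 1 $ j))"
      by (simp add: sum.distrib)
    also have "(\<Sum>i\<in>UNIV. \<Sum>j\<in>UNIV. c i j * (axis D 1 $ i) * y $ j) = (\<Sum>i\<in>UNIV. if i = D then (\<Sum>j\<in>UNIV. c D j * y $ j) else 0)"
      by (rule sum.cong[OF refl]) (simp add: axis_comp1)
    also have "\<dots> = (\<Sum>j\<in>UNIV. c D j * y $ j)" by simp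
    also have "(\<Sum>i\<in>UNIV. \<Sum>j\<in>UNIV. c i j * y $ i * (axis D 1 $ j)) = (\<Sum>i\<in>UNIV. c i D * y $ i)"
    proof (rule sum.cong[OF refl])
      fix i
      have "(\<Sum>j\<in>UNIV. c i j * y $ i * (axis D 1 $ j)) = (\<Sum>j\<in>UNIV. if j = D then c i D * y $ i else 0)"
        by (rule sum.cong[OF refl]) (simp add: axis_comp1)
      then show "(\<Sum>j\<in>UNIV. c i j * y $ i * (axis D 1 $ j)) = c i D * y $ i" by simp
    qed
    finally show ?thesis by (simp add: lfn_def sum.distrib algebra_simps)
  qed
  ultimately show ?thesis by simp
qed

lemma lfn_line_deriv:
  "((\<lambda>t. lfn l (y + t *\<^sub>R axis D 1)) has_real_derivative l D) (at 0)"
proof -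
  have "((\<lambda>t. lfn l (y + t *\<^sub>R axis D 1)) has_real_derivative (\<Sum>j\<in>UNIV. l j * axis D 1 $ j)) (at 0)"
    unfolding lfn_def by (auto intro!: derivative_eq_intros DERIV_sum)
  moreover have "(\<Sum>j\<in>UNIV. l j * axis D 1 $ j) = (\<Sum>j\<in>UNIV. if j = D then l D else 0)"
    by (rule sum.cong[OF refl]) (simp add: axis_comp1)
  then have "(\<Sum>j\<in>UNIV. l j * axis D 1 $ j) = l D" by simp
  ultimately show ?thesis by simp
qed

lemma pdy_qf: "pdy D (\<lambda>x y. qf c y) x y = lfn (\<lambda>j. c D j + c j D) y"
  by (rule pdy_eq) (rule qf_line_deriv)

lemma pdy_lfn: "pdy D (\<lambda>x y. lfn l y) x y = l D"
  by (rule pdy_eq) (rule lfn_line_deriv)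

lemma pdy_const: "pdy D (\<lambda>x y. k) x y = 0"
  by (rule pdy_eq) simp

lemma qf_euler: "(\<Sum>D\<in>UNIV. y $ D * lfn (\<lambda>j. c D j + c j D) y) = 2 * qf c y"
proof -
  have "(\<Sum>D\<in>UNIV. y $ D * lfn (\<lambda>j. c D j + c j D) y)
      = (\<Sum>D\<in>UNIV. \<Sum>j\<in>UNIV. c D j * y $ D * y $ j) + (\<Sum>D\<in>UNIV. \<Sum>j\<in>UNIV. c j D * y $ j * y $ D)"
    by (simp add: lfn_def sum_distrib_left sum.distrib algebra_simps)
  also have "(\<Sum>D\<in>UNIV. \<Sum>j\<in>UNIV. c j D * y $ j * y $ D) = qf c y"
    unfolding qf_def by (rule sum.swap)
  finally show ?thesis by (simp add: qf_def)
qed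

lemma qf_lincomb: "(\<Sum>D\<in>UNIV. m D * qf (c D) y) = qf (\<lambda>i j. \<Sum>D\<in>UNIV. m D * c D i j) y"
proof -
  have "(\<Sum>D\<in>UNIV. m D * qf (c D) y) = (\<Sum>D\<in>UNIV. \<Sum>i\<in>UNIV. \<Sum>j\<in>UNIV. m D * c D i j * y $ i * y $ j)"
    by (simp add: qf_def sum_distrib_left mult.assoc)
  also have "\<dots> = (\<Sum>i\<in>UNIV. \<Sum>D\<in>UNIV. \<Sum>j\<in>UNIV. m D * c D i j * y $ i * y $ j)"
    by (rule sum.swap)
  also have "\<dots> = (\<Sum>i\<in>UNIV. \<Sum>j\<in>UNIV. \<Sum>D\<in>UNIV. m D * c D i j * y $ i * y $ j)"
    by (rule sum.cong[OF refl], rule sum.swap)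
  also have "\<dots> = qf (\<lambda>i j. \<Sum>D\<in>UNIV. m D * c D i j) y"
    by (simp add: qf_def sum_distrib_right)
  finally show ?thesis .
qed

lemma qf_diff: "qf c y - qf d y = qf (\<lambda>i j. c i j - d i j) y"
  by (simp add: qf_def sum_subtractf left_diff_distrib)

lemma qf_scale: "k * qf c y = qf (\<lambda>i j. k * c i j) y"
  by (simp add: qf_def sum_distrib_left mult.assoc)

lemma inner_qf: "y \<bullet> (M *v y) = qf (\<lambda>i j. M $ i $ j) y"
  by (simp add: qf_def inner_vec_def matrix_vector_mult_def sum_distrib_left mult.commute mult.left_commute)

lemma lfn_sum: "(\<Sum>E\<in>UNIV. lfn (l E) y) = lfn (\<lambda>j. \<Sum>E\<in>UNIV. l E j) y"
  unfolding lfn_def sum_distrib_right by (rule sum.swap)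

lemma lfn_mult_qf: "lfn l y * y $ A = qf (\<lambda>i j. if i = A then l j else 0) y"
proof -
  have "qf (\<lambda>i j. if i = A then l j else 0) y = (\<Sum>i\<in>UNIV. if i = A then (\<Sum>j\<in>UNIV. l j * y $ A * y $ j) else 0)"
    unfolding qf_def by (rule sum.cong[OF refl]) simp
  also have "\<dots> = lfn l y * y $ A"
    unfolding lfn_def sum_distrib_right by (simp add: ac_simps)
  finally show ?thesis ..
qed

context randers_pt
begin

definition cK where "cK D i j = Da i $ D $ j - Da D $ i $ j / 2"
definition cG where "cG E i j = (\<Sum>D\<in>UNIV. (Ai $ E $ D * (1/2)) * cK D i j)"
definition cN where "cN i j = Db $ i $ j / 2 - (\<Sum>E\<in>UNIV. b x0 $ E * cG E i j)"

lemma K_qf: "K y $ D = qf (cK D) y"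
proof -
  have e1: "(\<Sum>C\<in>UNIV. y $ C * (Da C *v y) $ D) = qf (\<lambda>i j. Da i $ D $ j) y"
    by (simp add: qf_def matrix_vector_mult_def sum_distrib_left mult.commute mult.left_commute)
  have "K y $ D = qf (\<lambda>i j. Da i $ D $ j) y - (1/2) * qf (\<lambda>i j. Da D $ i $ j) y"
    by (simp add: K_def e1 inner_qf)
  also have "\<dots> = qf (cK D) y"
    unfolding qf_scale qf_diff cK_def[abs_def] by simp
  finally show ?thesis .
qed

lemma Ga_qf: "Ga y $ E = qf (cG E) y"
proof -
  have "Ga y $ E = (\<Sum>D\<in>UNIV. (Ai $ E $ D * (1/2)) * qf (cK D) y)"
    unfolding Ga_def mv_comp K_qf vector_scaleR_component real_scaleR_def
    by (simp add: mult.assoc)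
  also have "\<dots> = qf (cG E) y"
    unfolding qf_lincomb cG_def[abs_def] ..
  finally show ?thesis .
qed

lemma Nn_qf: "Nn y = qf cN y"
proof -
  have "b x0 \<bullet> Ga y = (\<Sum>E\<in>UNIV. b x0 $ E * qf (cG E) y)"
    by (simp add: inner_vec_def Ga_qf)
  also have "\<dots> = qf (\<lambda>i j. \<Sum>E\<in>UNIV. b x0 $ E * cG E i j) y" by (rule qf_lincomb)
  finally have 1: "b x0 \<bullet> Ga y = qf (\<lambda>i j. \<Sum>E\<in>UNIV. b x0 $ E * cG E i j) y" .
  have "Nn y = (1/2) * qf (\<lambda>i j. Db $ i $ j) y - qf (\<lambda>i j. \<Sum>E\<in>UNIV. b x0 $ E * cG E i j) y"
    by (simp add: Nn_def 1 inner_qf)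
  also have "\<dots> = qf cN y"
    unfolding qf_scale qf_diff cN_def[abs_def] by simp
  finally show ?thesis .
qed

definition dP where "dP E z = (lfn (\<lambda>j. cN E j + cN j E) z * F x0 z - qf cN z * Fy x0 z $ E) / (F x0 z)^2"

lemma P_qf: "P z = qf cN z / F x0 z"
  by (simp add: P_def Nn_qf)

lemma P_line_deriv:
  assumes "z \<noteq> 0" "F x0 z > 0"
  shows "((\<lambda>t. P (z + t *\<^sub>R axis E 1)) has_real_derivative dP E z) (at 0)"
  unfolding P_qf dP_def
  using assms(2)
  by (auto intro!: derivative_eq_intros qf_line_deriv F_line_deriv[OF assms(1)] simp: inner_axis power2_eq_square)

lemma pdy_Gc:
  assumes "z \<noteq> 0" "F x0 z > 0"
  shows "pdy E (\<lambda>x w. Gc w $ E) x0 z = lfn (\<lambda>j. cG E E j + cG E j E) z + dP E z * z $ E + P z"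
proof (rule pdy_eq)
  have e: "(\<lambda>t. Gc (z + t *\<^sub>R axis E 1) $ E) = (\<lambda>t. qf (cG E) (z + t *\<^sub>R axis E 1) + P (z + t *\<^sub>R axis E 1) * (z $ E + t))"
    by (simp add: Gc_def Ga_qf axis_comp1)
  show "((\<lambda>t. Gc (z + t *\<^sub>R axis E 1) $ E) has_real_derivative lfn (\<lambda>j. cG E E j + cG E j E) z + dP E z * z $ E + P z) (at 0)"
    unfolding e
    by (auto intro!: derivative_eq_intros qf_line_deriv P_line_deriv[OF assms])
qed

lemma Fy_z:
  assumes "z \<noteq> 0"
  shows "(\<Sum>E\<in>UNIV. Fy x0 z $ E * z $ E) = F x0 z"
proof -
  have p: "al x0 z > 0" using al_pos[OF assms] .
  have q: "(a x0 *v z) \<bullet> z = al x0 z ^ 2"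
    using q_pos[OF assms, of x0] by (simp add: al_def q_def inner_commute)
  have "(\<Sum>E\<in>UNIV. Fy x0 z $ E * z $ E) = Fy x0 z \<bullet> z" by (simp add: inner_vec_def)
  also have "\<dots> = ((a x0 *v z) \<bullet> z) / al x0 z + b x0 \<bullet> z"
    by (simp add: Fy_def inner_add_left)
  also have "\<dots> = F x0 z" using p by (simp add: q F_al power2_eq_square)
  finally show ?thesis .
qed

lemma sum_dP:
  assumes "z \<noteq> 0" "F x0 z > 0"
  shows "(\<Sum>E\<in>UNIV. dP E z * z $ E) = P z"
proof -
  let ?F = "F x0 z"
  have "(\<Sum>E\<in>UNIV. dP E z * z $ E) = (\<Sum>E\<in>UNIV. (?F / ?F^2) * (z $ E * lfn (\<lambda>j. cN E j + cN j E) z)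
        - (qf cN z / ?F^2) * (Fy x0 z $ E * z $ E))"
    by (rule sum.cong[OF refl]) (use assms(2) in \<open>simp add: dP_def field_simps\<close>)
  also have "\<dots> = (?F / ?F^2) * (\<Sum>E\<in>UNIV. z $ E * lfn (\<lambda>j. cN E j + cN j E) z)
        - (qf cN z / ?F^2) * (\<Sum>E\<in>UNIV. Fy x0 z $ E * z $ E)"
    unfolding sum_subtractf sum_distrib_left ..
  also have "\<dots> = (?F / ?F^2) * (2 * qf cN z) - (qf cN z / ?F^2) * ?F"
    unfolding qf_euler Fy_z[OF assms(1)] ..
  also have "\<dots> = P z" using assms(2) by (simp add: P_qf field_simps power2_eq_square)
  finally show ?thesis .
qed

definition lc where "lc j = (\<Sum>E\<in>UNIV. cG E E j + cG E j E)"

lemma douglas_zero: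
  assumes Fpos: "\<And>z. z \<noteq> 0 \<Longrightarrow> F x0 z > 0"
    and ginv: "\<And>z. z \<noteq> 0 \<Longrightarrow> invertible (fund_tensor F x0 z)"
    and y: "y \<noteq> 0"
  shows "douglas F A B C D x0 y = 0"
proof -
  define U where "U = - {0::real^'m}"
  have oU: "open U" unfolding U_def by (simp add: open_Compl)
  have yU: "y \<in> U" using y by (simp add: U_def)
  have pdyG: "pdy E (geod_coeff F E) x0 z = lfn (\<lambda>j. cG E E j + cG E j E) z + dP E z * z $ E + P z"
    if "z \<in> U" for z E
  proof -
    have z: "z \<noteq> 0" using that by (simp add: U_def)
    have "pdy E (geod_coeff F E) x0 z = pdy E (\<lambda>x w. Gc w $ E) x0 z"
      by (rule pdy_local[OF oU that]) (simp add: U_def geod_eq Fpos ginv)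
    then show ?thesis using pdy_Gc[OF z Fpos[OF z]] by simp
  qed
  have sumG: "(\<Sum>E\<in>UNIV. pdy E (geod_coeff F E) x0 z) = lfn lc z + (real CARD('m) + 1) * P z"
    if "z \<in> U" for z
  proof -
    have z: "z \<noteq> 0" using that by (simp add: U_def)
    have "(\<Sum>E\<in>UNIV. pdy E (geod_coeff F E) x0 z) =
       (\<Sum>E\<in>UNIV. lfn (\<lambda>j. cG E E j + cG E j E) z) + (\<Sum>E\<in>UNIV. dP E z * z $ E) + (\<Sum>E\<in>(UNIV::'m set). P z)"
      unfolding pdyG[OF that] sum.distrib by simp
    also have "\<dots> = lfn lc z + P z + real CARD('m) * P z"
      unfolding lfn_sum sum_dP[OF z Fpos[OF z]] lc_def by simp
    finally show ?thesis by (simp add: algebra_simps)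
  qed
  define cPhi where "cPhi i j = cG A i j - (1 / (real CARD('m) + 1)) * (if i = A then lc j else 0)" for i j
  define Phi where "Phi = (\<lambda>x y. geod_coeff F A x y - 1 / (real CARD('m) + 1) * (\<Sum>E\<in>UNIV. pdy E (geod_coeff F E) x y) * y $ A)"
  have Phi_qf: "Phi x0 z = qf cPhi z" if "z \<in> U" for z
  proof -
    have z: "z \<noteq> 0" using that by (simp add: U_def)
    have "Phi x0 z = qf (cG A) z + P z * z $ A - 1 / (real CARD('m) + 1) * (lfn lc z + (real CARD('m) + 1) * P z) * z $ A"
      unfolding Phi_def sumG[OF that] geod_eq[OF z Fpos[OF z] ginv[OF z]] Gc_def
      by (simp add: Ga_qf)
    also have "\<dots> = qf (cG A) z - (1 / (real CARD('m) + 1)) * (lfn lc z * z $ A)"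
      by (simp add: field_simps)
    also have "\<dots> = qf cPhi z"
      unfolding lfn_mult_qf qf_scale qf_diff cPhi_def[abs_def] ..
    finally show ?thesis .
  qed
  have s1: "pdy D Phi x0 z = lfn (\<lambda>j. cPhi D j + cPhi j D) z" if "z \<in> U" for z
    using pdy_local[OF oU that, of Phi x0 "\<lambda>x y. qf cPhi y" D] Phi_qf pdy_qf by simp
  have s2: "pdy C (pdy D Phi) x0 z = cPhi D C + cPhi C D" if "z \<in> U" for z
    using pdy_local[OF oU that, of "pdy D Phi" x0 "\<lambda>x y. lfn (\<lambda>j. cPhi D j + cPhi j D) y" C] s1 pdy_lfn by simp
  have s3: "pdy B (pdy C (pdy D Phi)) x0 y = 0"
    using pdy_local[OF oU yU, of "pdy C (pdy D Phi)" x0 "\<lambda>x y. cPhi D C + cPhi C D" B] s2 pdy_const by simp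
  show ?thesis using s3 by (simp add: douglas_def Phi_def)
qed

end

section \<open>The concrete metric\<close>

lemma sum_option_UNIV:
  "(\<Sum>i\<in>(UNIV::'n::finite option set). f i) = f None + (\<Sum>k\<in>UNIV. f (Some k))"
proof -
  have "(\<Sum>i\<in>(UNIV::'n option set). f i) = (\<Sum>i\<in>insert None (range Some). f i)"
    by (simp add: UNIV_option_conv)
  also have "\<dots> = f None + (\<Sum>i\<in>range Some. f i)"
    by (rule sum.insert) auto
  also have "(\<Sum>i\<in>range Some. f i) = (\<Sum>k\<in>UNIV. f (Some k))"
    by (subst sum.reindex) (auto simp: inj_on_def)
  finally show ?thesis .
qed

lemma xbar_comp: "xbar x $ k = x $ Some k"
  by (simp add: xbar_def)

lemma xbar_add: "xbar (x + y) = xbar x + xbar y"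
  by (simp add: xbar_def vec_eq_iff)

lemma xbar_scale: "xbar (c *\<^sub>R x) = c *\<^sub>R xbar x"
  by (simp add: xbar_def vec_eq_iff)

lemma xbar_eq0: "xbar y = 0 \<Longrightarrow> y $ None = 0 \<Longrightarrow> y = 0"
  unfolding vec_eq_iff xbar_comp by (metis option.exhaust zero_index)

definition a0 :: "real^('n::finite) option \<Rightarrow> real^'n option^'n option" where
  "a0 x = (\<chi> i j. case i of None \<Rightarrow> (case j of None \<Rightarrow> exp (x $ None) | Some l \<Rightarrow> 0)
      | Some k \<Rightarrow> (case j of None \<Rightarrow> 0
          | Some l \<Rightarrow> (1 + (norm (xbar x))^2) * (if k = l then 1 else 0) + xbar x $ k * xbar x $ l))"

definition b0 :: "(real \<Rightarrow> real) \<Rightarrow> real^('n::finite) option \<Rightarrow> real^'n option" where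
  "b0 h x = (\<chi> i. case i of None \<Rightarrow> 0 | Some k \<Rightarrow> h (norm (xbar x)) * xbar x $ k)"

lemma a0_q: "y \<bullet> (a0 x *v y) = (1 + (norm (xbar x))^2) * (norm (xbar y))^2 + (xbar x \<bullet> xbar y)^2
     + exp (x $ None) * (y $ None)^2"
proof -
  have inner_k: "(a0 x *v y) $ Some k = (1 + (norm (xbar x))^2) * xbar y $ k + xbar x $ k * (xbar x \<bullet> xbar y)" for k
  proof -
    have "(a0 x *v y) $ Some k = (\<Sum>l\<in>UNIV. ((1 + (norm (xbar x))^2) * (if k = l then 1 else 0) + xbar x $ k * xbar x $ l) * xbar y $ l)"
      by (simp add: mv_comp sum_option_UNIV a0_def xbar_comp)
    also have "\<dots> = (\<Sum>l\<in>UNIV. (if l = k then (1 + (norm (xbar x))^2) * xbar y $ l else 0) + xbar x $ k * (xbar x $ l * xbar y $ l))"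
      by (rule sum.cong) (auto simp: algebra_simps)
    also have "\<dots> = (1 + (norm (xbar x))^2) * xbar y $ k + xbar x $ k * (xbar x \<bullet> xbar y)"
      unfolding sum.distrib sum_distrib_left[symmetric] inner_vec_def inner_real_def by simp
    finally show ?thesis .
  qed
  have inner_0: "(a0 x *v y) $ None = exp (x $ None) * y $ None"
    by (simp add: mv_comp sum_option_UNIV a0_def)
  have "y \<bullet> (a0 x *v y) = y $ None * (a0 x *v y) $ None + (\<Sum>k\<in>UNIV. xbar y $ k * (a0 x *v y) $ Some k)"
    by (simp add: inner_vec_def sum_option_UNIV xbar_comp)
  also have "\<dots> = exp (x $ None) * (y $ None)^2 + ((1 + (norm (xbar x))^2) * (\<Sum>k\<in>UNIV. xbar y $ k * xbar y $ k)
      + (xbar x \<bullet> xbar y) * (\<Sum>k\<in>UNIV. xbar y $ k * xbar x $ k))"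
    by (simp add: inner_0 inner_k distrib_left sum.distrib sum_distrib_left power2_eq_square mult.commute mult.left_commute)
  also have "(\<Sum>k\<in>UNIV. xbar y $ k * xbar y $ k) = (norm (xbar y))^2"
    by (simp add: power2_norm_eq_inner inner_vec_def)
  also have "(\<Sum>k\<in>UNIV. xbar y $ k * xbar x $ k) = xbar x \<bullet> xbar y"
    by (simp add: inner_vec_def mult.commute)
  finally show ?thesis by (simp add: power2_eq_square algebra_simps)
qed

lemma b0_inner: "b0 h x \<bullet> y = h (norm (xbar x)) * (xbar x \<bullet> xbar y)"
  by (simp add: inner_vec_def sum_option_UNIV b0_def xbar_comp sum_distrib_left mult.assoc)

lemma F_ex_eq: "F_ex h x y = sqrt (y \<bullet> (a0 x *v y)) + b0 h x \<bullet> y"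
  by (simp add: F_ex_def a0_q b0_inner add.commute add.left_commute)

lemma a0_sym: "transpose (a0 x) = a0 x"
  by (simp add: transpose_def a0_def vec_eq_iff split: option.split)

lemma a0_pos: "y \<noteq> 0 \<Longrightarrow> y \<bullet> (a0 x *v y) > 0"
proof -
  assume y: "y \<noteq> 0"
  have "xbar y \<noteq> 0 \<or> y $ None \<noteq> 0" using xbar_eq0 y by blast
  then have "(norm (xbar y))^2 + exp (x $ None) * (y $ None)^2 > 0"
    by (metis add_nonneg_pos add_pos_nonneg exp_gt_zero mult_pos_pos norm_eq_zero zero_le_power2 zero_less_power2 mult_nonneg_nonneg exp_ge_zero)
  moreover have "(norm (xbar y))^2 \<le> (1 + (norm (xbar x))^2) * (norm (xbar y))^2"
    by (simp add: algebra_simps)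
  ultimately show ?thesis unfolding a0_q
    by (smt (verit) zero_le_power2)
qed

interpretation ex: randers a0 "b0 h" "F_ex h"
  by unfold_locales (simp_all add: F_ex_eq a0_sym a0_pos)

lemma smooth_h_facts:
  assumes "smooth_real_on {0..<\<rho>} h" "\<rho> > 0"
  obtains h' where "\<And>r. 0 < r \<Longrightarrow> r < \<rho> \<Longrightarrow> (h has_real_derivative h' r) (at r)"
    and "((\<lambda>t. h \<bar>t\<bar>) \<longlongrightarrow> h 0) (at 0)"
proof -
  let ?S = "{0..<\<rho>}"
  obtain D :: "nat \<Rightarrow> real \<Rightarrow> real" where D0: "\<And>t. t \<in> ?S \<Longrightarrow> D 0 t = h t"
    and DD: "\<And>k t. t \<in> ?S \<Longrightarrow> (D k has_real_derivative D (Suc k) t) (at t within ?S)"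
    using assms(1) unfolding smooth_real_on_def by blast
  have hd: "(h has_real_derivative D 1 r) (at r)" if "0 < r" "r < \<rho>" for r
  proof -
    have "(D 0 has_real_derivative D 1 r) (at r within ?S)" using DD[of r 0] that by simp
    moreover have "at r within ?S = at r" using that by (intro at_within_interior) simp
    ultimately have "(D 0 has_real_derivative D 1 r) (at r)" by simp
    then show ?thesis
      by (rule has_field_derivative_transform_within_open[of _ _ _ "{0<..<\<rho>}"]) (use that D0 in auto)
  qed
  have ev: "eventually (\<lambda>t. \<bar>t\<bar> \<in> ?S \<and> \<bar>t\<bar> \<noteq> 0) (at (0::real))"
    unfolding eventually_at using assms(2) by (intro exI[of _ \<rho>]) auto
  have "continuous (at 0 within ?S) (D 0)" using DD[of 0 0] assms(2) by (intro DERIV_continuous) auto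
  then have "(D 0 \<longlongrightarrow> D 0 0) (at 0 within ?S)" by (simp add: continuous_within)
  moreover have "filterlim (\<lambda>t::real. \<bar>t\<bar>) (at 0 within ?S) (at 0)"
    unfolding filterlim_at using ev by (auto intro!: tendsto_eq_intros)
  ultimately have "((\<lambda>t. D 0 \<bar>t\<bar>) \<longlongrightarrow> D 0 0) (at 0)" by (rule filterlim_compose)
  moreover have "D 0 0 = h 0" using D0 assms(2) by simp
  moreover have "eventually (\<lambda>t. D 0 \<bar>t\<bar> = h \<bar>t\<bar>) (at (0::real))"
    using ev by eventually_elim (simp add: D0)
  ultimately have "((\<lambda>t. h \<bar>t\<bar>) \<longlongrightarrow> h 0) (at 0)" using tendsto_cong by fastforce
  with hd that show ?thesis by blast
qed

lemma habs_deriv: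
  assumes "((\<lambda>t. h \<bar>t\<bar>) \<longlongrightarrow> h 0) (at (0::real))"
  shows "((\<lambda>t. h \<bar>t\<bar> * t) has_real_derivative h 0) (at 0)"
proof -
  have "eventually (\<lambda>y. h \<bar>y\<bar> = (h \<bar>y\<bar> * y - h \<bar>0\<bar> * 0) / (y - 0)) (at (0::real))"
    unfolding eventually_at by (intro exI[of _ 1]) auto
  with assms have "((\<lambda>y. (h \<bar>y\<bar> * y - h \<bar>0\<bar> * 0) / (y - 0)) \<longlongrightarrow> h 0) (at 0)"
    using tendsto_cong by fastforce
  then show ?thesis by (simp add: has_field_derivative_iff)
qed

lemma norm_line_sq: "(norm (u + t *\<^sub>R v))^2 = (norm u)^2 + t * (2 * (u \<bullet> v)) + t^2 * (norm v)^2"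
  by (simp only: power2_norm_eq_inner) (simp add: inner_add_left inner_add_right inner_commute algebra_simps power2_eq_square)

lemma xbar_line: "xbar (x + t *\<^sub>R v) = xbar x + t *\<^sub>R xbar v"
  by (simp add: xbar_add xbar_scale)

lemma xbar_axis_None: "xbar (axis None (1::real) :: real^('n::finite) option) = 0"
  by (simp add: xbar_def axis_def vec_eq_iff)

lemma xbar_axis_Some: "xbar (axis (Some c) (1::real) :: real^('n::finite) option) = axis c 1"
  by (simp add: xbar_def axis_def vec_eq_iff)

definition Da0 :: "real^('n::finite) option \<Rightarrow> 'n option \<Rightarrow> real^'n option^'n option" where
  "Da0 x C = (\<chi> i j. case i of None \<Rightarrow> (case j of None \<Rightarrow> exp (x $ None) * axis C 1 $ None | Some l \<Rightarrow> 0)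
      | Some k \<Rightarrow> (case j of None \<Rightarrow> 0
          | Some l \<Rightarrow> 2 * (xbar x \<bullet> xbar (axis C 1)) * (if k = l then 1 else 0)
              + xbar (axis C 1) $ k * xbar x $ l + xbar x $ k * xbar (axis C 1) $ l))"

lemma da0: "((\<lambda>t. a0 (x + t *\<^sub>R axis C 1) $ i $ j) has_real_derivative Da0 x C $ i $ j) (at 0)"
proof (cases i)
  case None
  then show ?thesis
    by (cases j) (auto simp: a0_def Da0_def intro!: derivative_eq_intros)
next
  case (Some k)
  then show ?thesis
  proof (cases j)
    case None
    then show ?thesis using Some by (simp add: a0_def Da0_def)
  next
    case (Some l)
    have e: "(\<lambda>t. a0 (x + t *\<^sub>R axis C 1) $ i $ j) = (\<lambda>t. (1 + ((norm (xbar x))^2 + t * (2 * (xbar x \<bullet> xbar (axis C 1))) + t^2 * (norm (xbar (axis C 1)))^2))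
        * (if k = l then 1 else 0) + (xbar x $ k + t * xbar (axis C 1) $ k) * (xbar x $ l + t * xbar (axis C 1) $ l))"
      using \<open>i = Some k\<close> Some by (simp add: a0_def xbar_line norm_line_sq)
    show ?thesis unfolding e using \<open>i = Some k\<close> Some
      by (auto simp: Da0_def intro!: derivative_eq_intros)
  qed
qed

definition Db0 :: "(real \<Rightarrow> real) \<Rightarrow> (real \<Rightarrow> real) \<Rightarrow> real^('n::finite) option \<Rightarrow> real^'n option^'n option" where
  "Db0 h h' x = (\<chi> C j. case C of None \<Rightarrow> 0 | Some c \<Rightarrow> (case j of None \<Rightarrow> 0
      | Some k \<Rightarrow> h (norm (xbar x)) * (if c = k then 1 else 0)
          + (if xbar x = 0 then 0 else h' (norm (xbar x)) * xbar x $ c * xbar x $ k / norm (xbar x))))"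

lemma Db0_sym: "Db0 h h' x $ C $ j = Db0 h h' x $ j $ C"
  by (simp add: Db0_def split: option.split)

lemma db0:
  assumes hd: "\<And>r. 0 < r \<Longrightarrow> r < \<rho> \<Longrightarrow> (h has_real_derivative h' r) (at r)"
    and hc: "((\<lambda>t. h \<bar>t\<bar>) \<longlongrightarrow> h 0) (at 0)"
    and xr: "norm (xbar x) < \<rho>"
  shows "((\<lambda>t. b0 h (x + t *\<^sub>R axis C 1) $ j) has_real_derivative Db0 h h' x $ C $ j) (at 0)"
proof (cases C)
  case None
  then show ?thesis by (cases j) (simp_all add: b0_def Db0_def xbar_line xbar_axis_None)
next
  case (Some c)
  show ?thesis
  proof (cases j)
    case None
    then show ?thesis using Some by (simp add: b0_def Db0_def)
  next
    case (Some k)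
    let ?e = "axis c 1 :: real^'a"
    have e: "(\<lambda>t. b0 h (x + t *\<^sub>R axis C 1) $ j) = (\<lambda>t. h (norm (xbar x + t *\<^sub>R ?e)) * (xbar x $ k + t * ?e $ k))"
      using \<open>C = Some c\<close> Some by (simp add: b0_def xbar_line xbar_axis_Some)
    have Dv: "Db0 h h' x $ C $ j = h (norm (xbar x)) * (if c = k then 1 else 0)
          + (if xbar x = 0 then 0 else h' (norm (xbar x)) * xbar x $ c * xbar x $ k / norm (xbar x))"
      using \<open>C = Some c\<close> Some by (simp add: Db0_def)
    show ?thesis
    proof (cases "xbar x = 0")
      case True
      show ?thesis
      proof (cases "c = k")
        case True
        have "(\<lambda>t. h (norm (xbar x + t *\<^sub>R ?e)) * (xbar x $ k + t * ?e $ k)) = (\<lambda>t. h \<bar>t\<bar> * t)"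
          using \<open>xbar x = 0\<close> True by (simp add: axis_comp1)
        then show ?thesis unfolding e Dv using habs_deriv[OF hc] \<open>xbar x = 0\<close> True by simp
      next
        case False
        have "(\<lambda>t. h (norm (xbar x + t *\<^sub>R ?e)) * (xbar x $ k + t * ?e $ k)) = (\<lambda>t. 0)"
          using \<open>xbar x = 0\<close> False by (simp add: axis_comp1)
        then show ?thesis unfolding e Dv using \<open>xbar x = 0\<close> False by simp
      qed
    next
      case False
      define r where "r = norm (xbar x)"
      have r: "r > 0" using False by (simp add: r_def)
      have nl: "norm (xbar x + t *\<^sub>R ?e) = sqrt (r^2 + t * (2 * xbar x $ c) + t^2 * 1)" for t
      proof -
        have "norm (xbar x + t *\<^sub>R ?e) = sqrt ((norm (xbar x + t *\<^sub>R ?e))^2)" by simp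
        also have "\<dots> = sqrt (r^2 + t * (2 * xbar x $ c) + t^2 * 1)"
          unfolding norm_line_sq r_def by (simp add: inner_axis)
        finally show ?thesis .
      qed
      have dn: "((\<lambda>t. norm (xbar x + t *\<^sub>R ?e)) has_real_derivative xbar x $ c / r) (at 0)"
        unfolding nl using sqrt_poly_deriv[of "r^2" "2 * xbar x $ c" 1] r by simp
      have hr: "(h has_real_derivative h' r) (at ((\<lambda>t. norm (xbar x + t *\<^sub>R ?e)) 0))"
        using hd[of r] r xr by (simp add: r_def)
      have dh: "((\<lambda>t. h (norm (xbar x + t *\<^sub>R ?e))) has_real_derivative h' r * (xbar x $ c / r)) (at 0)"
        by (rule DERIV_chain2[OF hr dn])
      have dk: "((\<lambda>t. xbar x $ k + t * ?e $ k) has_real_derivative ?e $ k) (at 0)"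
        by (auto intro!: derivative_eq_intros)
      have "((\<lambda>t. h (norm (xbar x + t *\<^sub>R ?e)) * (xbar x $ k + t * ?e $ k)) has_real_derivative
          h' r * (xbar x $ c / r) * (xbar x $ k + 0 * ?e $ k) + ?e $ k * h (norm (xbar x + 0 *\<^sub>R ?e))) (at 0)"
        by (rule DERIV_mult[OF dh dk])
      then show ?thesis unfolding e Dv
        by (rule DERIV_cong) (use False r in \<open>simp add: r_def axis_comp1\<close>)
    qed
  qed
qed

lemma posdef_invertible:
  fixes g :: "real^'m::finite^'m"
  assumes "\<forall>v. v \<noteq> 0 \<longrightarrow> (\<Sum>A\<in>UNIV. \<Sum>B\<in>UNIV. g $ A $ B * v $ A * v $ B) > 0"
  shows "invertible g"
proof (rule invertible_from_ker)
  fix v assume v: "g *v v = 0"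
  show "v = 0"
  proof (rule ccontr)
    assume "v \<noteq> 0"
    then have "(\<Sum>A\<in>UNIV. \<Sum>B\<in>UNIV. g $ A $ B * v $ A * v $ B) > 0" using assms by blast
    moreover have "(\<Sum>A\<in>UNIV. \<Sum>B\<in>UNIV. g $ A $ B * v $ A * v $ B) = v \<bullet> (g *v v)"
      by (simp add: inner_qf qf_def)
    ultimately show False using v by simp
  qed
qed

theorem mainTheorem8:
  fixes h :: "real \<Rightarrow> real" and \<rho> :: real
  assumes "CARD('n::finite) \<ge> 3"
    and "\<rho> > 0"
    and "smooth_real_on {0..<\<rho>} h"
    and "finsler_metric (cyl_domain \<rho> :: (real^'n option) set) (F_ex h)"
  shows "cylindrically_symmetric (cyl_domain \<rho> :: (real^'n option) set) (F_ex h)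
       \<and> vanishing_douglas (cyl_domain \<rho> :: (real^'n option) set) (F_ex h)"
proof
  show "cylindrically_symmetric (cyl_domain \<rho> :: (real^'n option) set) (F_ex h)"
    unfolding cylindrically_symmetric_def
  proof (intro allI impI ballI)
    fix Q :: "real^'n \<Rightarrow> real^'n" and x y :: "real^'n option"
    assume Q: "orthogonal_transformation Q"
    have xb: "xbar (lift_orth Q v) = Q (xbar v)" for v
      by (simp add: xbar_def lift_orth_def vec_eq_iff)
    have n0: "lift_orth Q v $ None = v $ None" for v
      by (simp add: lift_orth_def)
    have ip: "Q u \<bullet> Q w = u \<bullet> w" for u w
      using Q unfolding orthogonal_transformation_def by blast
    show "F_ex h (lift_orth Q x) (lift_orth Q y) = F_ex h x y"
      by (simp add: F_ex_def xb n0 ip orthogonal_transformation_norm[OF Q])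
  qed
next
  obtain h' where hd: "\<And>r. 0 < r \<Longrightarrow> r < \<rho> \<Longrightarrow> (h has_real_derivative h' r) (at r)"
    and hc: "((\<lambda>t. h \<bar>t\<bar>) \<longlongrightarrow> h 0) (at 0)"
    using smooth_h_facts[OF assms(3,2)] by blast
  have fm: "\<And>x y. (x::real^'n option) \<in> cyl_domain \<rho> \<Longrightarrow> y \<noteq> 0 \<Longrightarrow> F_ex h x y > 0"
    using assms(4) unfolding finsler_metric_def by blast
  have pd: "\<And>x y. (x::real^'n option) \<in> cyl_domain \<rho> \<Longrightarrow> y \<noteq> 0 \<Longrightarrow>
       (\<forall>v. v \<noteq> 0 \<longrightarrow> (\<Sum>A\<in>UNIV. \<Sum>B\<in>UNIV. fund_tensor (F_ex h) x y $ A $ B * v $ A * v $ B) > 0)"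
    using assms(4) unfolding finsler_metric_def by blast
  show "vanishing_douglas (cyl_domain \<rho> :: (real^'n option) set) (F_ex h)"
    unfolding vanishing_douglas_def
  proof (intro ballI allI impI)
    fix x y :: "real^'n option" and A B C D :: "'n option"
    assume x: "x \<in> cyl_domain \<rho>" and y: "y \<noteq> 0"
    have xr: "norm (xbar x) < \<rho>" using x by (simp add: cyl_domain_def)
    interpret P: randers_pt a0 "b0 h" "F_ex h" x "Da0 x" "Db0 h h' x"
      apply unfold_locales
      by (rule F_ex_eq a0_sym a0_pos da0 db0[OF hd hc xr] Db0_sym | assumption)+
    show "douglas (F_ex h) A B C D x y = 0"
      by (rule P.douglas_zero[OF fm[OF x] posdef_invertible[OF pd[OF x]] y])
  qed
qed

end
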